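(* Let $X$ and $Y$ be nontrivial real Banach spaces. (a) If $X^*$ has the weak$^*$ strong diameter $2$ property, then $(X\oplus_1 Y)^*$ has the weak$^*$ strong diameter $2$ property. (b) If $1<p<\infty$, then $(X\oplus_p Y)^*$ does not have the weak$^*$ strong diameter $2$ property. (c) If $X^*$ and $Y^*$ have the weak$^*$ strong diameter $2$ property, then $(X\oplus_\infty Y)^*$ has the weak$^*$ strong diameter $2$ property. (d) If $(X\oplus_\infty Y)^*$ has the weak$^*$ strong diameter $2$ property, then $X^*$ has the weak$^*$ strong diameter $2$ property.
   Context: For $1\le p<\infty$, $X\oplus_p Y$ is $X\times Y$ with norm $(\|x\|^p+\|y\|^p)^{1/p}$; $X\oplus_\infty Y$ has norm $\max\{\|x\|,\|y\|\}$. For a Banach space $Z$, a weak$^*$ slice of $B_{Z^*}$ is a set $\{z^*\in B_{Z^*}: z^*(z)>1-\alpha\}$ with $z\in S_Z$, $\alpha>0$; $Z^*$ has the weak$^*$ strong diameter $2$ property if every convex combination $\sum_{i=1}^n\lambda_iS_i$ ($n\in\mathbb{N}$, $\lambda_i\geq0$, $\sum\lambda_i=1$, $S_i$ weak$^*$ slices of $B_{Z^*}$) has diameter $2$. *)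

theory Defs
  imports "HOL-Analysis.Analysis"
begin

text \<open>We work with a real vector space Z carrying a norm N (given as a function).
  This lets us treat X (with its own norm) and X \<times> Y with the p-sum norms uniformly.
  The dual Z* is the space of N-bounded linear functionals Z \<Rightarrow> real with the dual norm.\<close>

definition dual_norm :: "('z::real_vector \<Rightarrow> real) \<Rightarrow> ('z \<Rightarrow> real) \<Rightarrow> real" where
  "dual_norm N f = Sup {\<bar>f z\<bar> | z. N z \<le> 1}"

definition dual_ball :: "('z::real_vector \<Rightarrow> real) \<Rightarrow> ('z \<Rightarrow> real) set" where
  "dual_ball N = {f. linear f \<and> (\<exists>C. \<forall>z. \<bar>f z\<bar> \<le> C * N z) \<and> dual_norm N f \<le> 1}"

definition wstar_slice :: "('z::real_vector \<Rightarrow> real) \<Rightarrow> 'z \<Rightarrow> real \<Rightarrow> ('z \<Rightarrow> real) set" where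
  "wstar_slice N z \<alpha> = {f \<in> dual_ball N. f z > 1 - \<alpha>}"

definition comb_sets :: "nat \<Rightarrow> (nat \<Rightarrow> real) \<Rightarrow> (nat \<Rightarrow> ('z::real_vector \<Rightarrow> real) set)
    \<Rightarrow> ('z \<Rightarrow> real) set" where
  "comb_sets n c S = {(\<lambda>z. \<Sum>i<n. c i * f i z) | f. \<forall>i<n. f i \<in> S i}"

definition dual_diam :: "('z::real_vector \<Rightarrow> real) \<Rightarrow> ('z \<Rightarrow> real) set \<Rightarrow> real" where
  "dual_diam N A = Sup {dual_norm N (\<lambda>z. g z - h z) | g h. g \<in> A \<and> h \<in> A}"

definition wstar_SD2P :: "('z::real_vector \<Rightarrow> real) \<Rightarrow> bool" where
  "wstar_SD2P N \<longleftrightarrow>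
     (\<forall>n::nat. \<forall>c zs \<alpha>s. n \<ge> 1 \<and> (\<forall>i<n. c i \<ge> 0) \<and> (\<Sum>i<n. c i) = 1
        \<and> (\<forall>i<n. N (zs i) = 1 \<and> \<alpha>s i > 0)
        \<longrightarrow> dual_diam N (comb_sets n c (\<lambda>i. wstar_slice N (zs i) (\<alpha>s i))) = 2)"

definition norm_sum1 :: "('a::real_normed_vector \<times> 'b::real_normed_vector) \<Rightarrow> real" where
  "norm_sum1 w = norm (fst w) + norm (snd w)"

definition norm_sump :: "real \<Rightarrow> ('a::real_normed_vector \<times> 'b::real_normed_vector) \<Rightarrow> real" where
  "norm_sump p w = (norm (fst w) powr p + norm (snd w) powr p) powr (1 / p)"

definition norm_suminf :: "('a::real_normed_vector \<times> 'b::real_normed_vector) \<Rightarrow> real" where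
  "norm_suminf w = max (norm (fst w)) (norm (snd w))"

end

theory Submission
  imports Defs
begin


lemma HB_ext:
  fixes G :: "('a::real_normed_vector \<times> real) set" and u0 :: 'a
  assumes sub: "subspace G" and dom: "\<forall>(u,t)\<in>G. t \<le> norm u" and nin: "\<forall>t. (u0,t) \<notin> G"
  shows "\<exists>G'. subspace G' \<and> (\<forall>(u,t)\<in>G'. t \<le> norm u) \<and> G \<subseteq> G' \<and> G' \<noteq> G"
proof -
  have G0: "(0,0) \<in> G" using sub by (simp add: subspace_def zero_prod_def)
  have key: "t - norm (g - u0) \<le> norm (g' + u0) - t'" if "(g,t) \<in> G" "(g',t') \<in> G" for g t g' t'
  proof -
    have "(g + g', t + t') \<in> G" using sub that subspace_add[OF sub that] by simp
    hence "t + t' \<le> norm (g + g')" using dom by auto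
    also have "\<dots> \<le> norm (g - u0) + norm (g' + u0)"
      using norm_triangle_ineq[of "g - u0" "g' + u0"] by simp
    finally show ?thesis by simp
  qed
  define L where "L = {t - norm (g - u0) | (g::'a) t. (g,t) \<in> G}"
  define c where "c = Sup L"
  have Lne: "L \<noteq> {}" using G0 unfolding L_def by blast
  have Lbdd: "bdd_above L" unfolding L_def bdd_above_def using key G0 by blast
  have c1: "t - norm (g - u0) \<le> c" if "(g,t) \<in> G" for g t
    unfolding c_def by (rule cSup_upper[OF _ Lbdd]) (use that L_def in blast)
  have c2: "c \<le> norm (g' + u0) - t'" if "(g',t') \<in> G" for g' t'
    unfolding c_def by (rule cSup_least[OF Lne]) (use that key L_def in blast)
  define G' where "G' = {p. \<exists>(g::'a) t s. p = (g + s *\<^sub>R u0, t + s * c) \<and> (g,t) \<in> G}"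
  have "subspace G'"
  proof (rule subspaceI)
    show "0 \<in> G'" unfolding G'_def using G0 by (force simp: zero_prod_def)
  next
    fix a b assume "a \<in> G'" "b \<in> G'"
    then obtain g t s g' t' s' where a: "a = (g + s *\<^sub>R u0, t + s * c)" "(g,t) \<in> G"
      and b: "b = (g' + s' *\<^sub>R u0, t' + s' * c)" "(g',t') \<in> G" unfolding G'_def by blast
    have "(g + g', t + t') \<in> G" using subspace_add[OF sub a(2) b(2)] by simp
    moreover have "a + b = ((g + g') + (s + s') *\<^sub>R u0, (t + t') + (s + s') * c)"
      using a b by (simp add: algebra_simps scaleR_add_left)
    ultimately show "a + b \<in> G'" unfolding G'_def by blast
  next
    fix r a assume "a \<in> G'"
    then obtain g t s where a: "a = (g + s *\<^sub>R u0, t + s * c)" "(g,t) \<in> G" unfolding G'_def by blast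
    have "(r *\<^sub>R g, r * t) \<in> G" using subspace_scale[OF sub a(2), of r] by simp
    moreover have "r *\<^sub>R a = (r *\<^sub>R g + (r * s) *\<^sub>R u0, r * t + (r * s) * c)"
      using a by (simp add: algebra_simps scaleR_add_right)
    ultimately show "r *\<^sub>R a \<in> G'" unfolding G'_def by blast
  qed
  moreover have "\<forall>(u,t)\<in>G'. t \<le> norm u"
  proof clarify
    fix u t assume "(u,t) \<in> G'"
    then obtain g t0 s where ut: "u = g + s *\<^sub>R u0" "t = t0 + s * c" and gt: "(g,t0) \<in> G"
      unfolding G'_def by blast
    consider "s = 0" | "s > 0" | "s < 0" by linarith
    thus "t \<le> norm u"
    proof cases
      case 1 thus ?thesis using ut gt dom by auto
    next
      case 2
      have "((1/s) *\<^sub>R g, (1/s) * t0) \<in> G" using subspace_scale[OF sub gt, of "1/s"] by simp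
      from c2[OF this] have "s * c \<le> s * (norm ((1/s) *\<^sub>R g + u0) - (1/s) * t0)"
        using 2 by (simp add: mult_left_mono)
      moreover have "s * (norm ((1/s) *\<^sub>R g + u0) - (1/s) * t0) = s * norm ((1/s) *\<^sub>R g + u0) - t0"
        using 2 by (simp add: right_diff_distrib)
      moreover have "s *\<^sub>R ((1/s) *\<^sub>R g + u0) = u" using 2 ut by (simp add: scaleR_add_right)
      hence "s * norm ((1/s) *\<^sub>R g + u0) = norm u" using 2 by (metis abs_of_pos norm_scaleR)
      ultimately show ?thesis using ut by linarith
    next
      case 3
      define r where "r = -s"
      have r: "r > 0" using 3 r_def by simp
      have "((1/r) *\<^sub>R g, (1/r) * t0) \<in> G" using subspace_scale[OF sub gt, of "1/r"] by simp
      from c1[OF this] have "r * ((1/r) * t0 - norm ((1/r) *\<^sub>R g - u0)) \<le> r * c"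
        using r by (simp add: mult_left_mono)
      moreover have "r * ((1/r) * t0 - norm ((1/r) *\<^sub>R g - u0)) = t0 - r * norm ((1/r) *\<^sub>R g - u0)"
        using r by (simp add: right_diff_distrib)
      moreover have "r *\<^sub>R ((1/r) *\<^sub>R g - u0) = u" using r ut r_def by (simp add: scaleR_diff_right)
      hence "r * norm ((1/r) *\<^sub>R g - u0) = norm u" using r by (metis abs_of_pos norm_scaleR)
      moreover have "s * c = - (r * c)" by (simp add: r_def)
      ultimately show ?thesis using ut by linarith
    qed
  qed
  moreover have "G \<subseteq> G'" unfolding G'_def by force
  moreover have "(u0, c) \<in> G'" unfolding G'_def using G0 by force
  ultimately show ?thesis using nin by blast
qed

lemma HB_norming:
  fixes x :: "'a::real_normed_vector"
  shows "\<exists>f. linear f \<and> (\<forall>u. \<bar>f u\<bar> \<le> norm u) \<and> f x = norm x"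
proof -
  define A where "A = {G :: ('a \<times> real) set. subspace G \<and> (\<forall>(u,t)\<in>G. t \<le> norm u) \<and> (x, norm x) \<in> G}"
  have "span {(x, norm x)} \<in> A"
  proof -
    have "\<forall>(u,t)\<in>span {(x, norm x)}. t \<le> norm u"
    proof (clarsimp simp: span_singleton)
      fix k :: real
      show "k * norm x \<le> \<bar>k\<bar> * norm x" by (simp add: mult_right_mono)
    qed
    thus ?thesis unfolding A_def by (auto simp: subspace_span span_base)
  qed
  hence Ane: "A \<noteq> {}" by blast
  have ch: "\<Union>C \<in> A" if Cne: "C \<noteq> {}" and Cch: "subset.chain A C" for C
  proof -
    have CA: "C \<subseteq> A" and cmp: "\<And>X Y. X \<in> C \<Longrightarrow> Y \<in> C \<Longrightarrow> X \<subseteq> Y \<or> Y \<subseteq> X"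
      using Cch by (auto simp: subset.chain_def)
    obtain X0 where X0: "X0 \<in> C" using Cne by blast
    have "subspace (\<Union>C)"
    proof (rule subspaceI)
      show "0 \<in> \<Union>C" using X0 CA unfolding A_def by (auto simp: subspace_def)
    next
      fix a b assume "a \<in> \<Union>C" "b \<in> \<Union>C"
      then obtain X Y where "a \<in> X" "X \<in> C" "b \<in> Y" "Y \<in> C" by blast
      with cmp[of X Y] CA show "a + b \<in> \<Union>C" unfolding A_def
        by (auto intro: subspace_add)
    next
      fix c a assume "a \<in> \<Union>C"
      then obtain X where "a \<in> X" "X \<in> C" by blast
      with CA show "c *\<^sub>R a \<in> \<Union>C" unfolding A_def by (auto intro: subspace_scale)
    qed
    moreover have "\<forall>(u,t)\<in>\<Union>C. t \<le> norm u" using CA unfolding A_def by blast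
    moreover have "(x, norm x) \<in> \<Union>C" using X0 CA unfolding A_def by blast
    ultimately show ?thesis unfolding A_def by blast
  qed
  obtain M where MA: "M \<in> A" and Mmax: "\<forall>X\<in>A. M \<subseteq> X \<longrightarrow> X = M"
    using subset_Zorn_nonempty[OF Ane ch] by blast
  have Msub: "subspace M" and Mdom: "\<forall>(u,t)\<in>M. t \<le> norm u" and Mx: "(x, norm x) \<in> M"
    using MA unfolding A_def by auto
  have tot: "\<exists>t. (u,t) \<in> M" for u
  proof (rule ccontr)
    assume "\<nexists>t. (u, t) \<in> M"
    then obtain G' where "subspace G'" "\<forall>(u,t)\<in>G'. t \<le> norm u" "M \<subseteq> G'" "G' \<noteq> M"
      using HB_ext[OF Msub Mdom] by blast
    moreover have "G' \<in> A" using calculation Mx unfolding A_def by blast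
    ultimately show False using Mmax by blast
  qed
  have uniq: "t = t'" if "(u,t) \<in> M" "(u,t') \<in> M" for u t t'
  proof -
    have "(u,t) - (u,t') \<in> M" by (rule subspace_diff[OF Msub that])
    hence "t - t' \<le> 0" using Mdom by auto
    moreover have "(u,t') - (u,t) \<in> M" by (rule subspace_diff[OF Msub that(2,1)])
    hence "t' - t \<le> 0" using Mdom by auto
    ultimately show ?thesis by simp
  qed
  define f where "f u = (THE t. (u,t) \<in> M)" for u
  have fM: "(u, f u) \<in> M" for u
    unfolding f_def using tot[of u] uniq by (metis theI)
  have fe: "f u = t" if "(u,t) \<in> M" for u t using uniq[OF fM that] .
  have lin: "linear f"
  proof (rule linearI)
    fix a b
    have "(a,f a) + (b, f b) \<in> M" by (rule subspace_add[OF Msub fM fM])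
    thus "f (a + b) = f a + f b" using fe by simp
  next
    fix c :: real and a
    have "c *\<^sub>R (a, f a) \<in> M" by (rule subspace_scale[OF Msub fM])
    thus "f (c *\<^sub>R a) = c *\<^sub>R f a" using fe by simp
  qed
  have "\<bar>f u\<bar> \<le> norm u" for u
  proof -
    have "f u \<le> norm u" using fM Mdom by blast
    moreover have "f (-u) \<le> norm (-u)" using fM Mdom by blast
    moreover have "f (-u) = - f u" using linear_neg[OF lin] by simp
    ultimately show ?thesis by simp
  qed
  moreover have "f x = norm x" using fe[OF Mx] .
  ultimately show ?thesis using lin by blast
qed



definition normlike :: "('z::real_vector \<Rightarrow> real) \<Rightarrow> bool" where
  "normlike N \<longleftrightarrow> (\<forall>c z. N (c *\<^sub>R z) = \<bar>c\<bar> * N z) \<and> (\<forall>z. 0 \<le> N z)"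

definition bnd :: "('z::real_vector \<Rightarrow> real) \<Rightarrow> ('z \<Rightarrow> real) \<Rightarrow> bool" where
  "bnd N f \<longleftrightarrow> (\<exists>C. \<forall>z. \<bar>f z\<bar> \<le> C * N z)"

lemma nl_zero: "normlike N \<Longrightarrow> N 0 = 0"
  unfolding normlike_def by (metis abs_zero mult_zero_left scale_zero_left)

lemma nl_nonneg: "normlike N \<Longrightarrow> 0 \<le> N z"
  unfolding normlike_def by blast

lemma nl_scale: "normlike N \<Longrightarrow> N (c *\<^sub>R z) = \<bar>c\<bar> * N z"
  unfolding normlike_def by blast

lemma dn_set_bdd:
  assumes "normlike N" "bnd N f"
  shows "bdd_above {\<bar>f z\<bar> | z. N z \<le> 1}"
proof -
  obtain C where C: "\<And>z. \<bar>f z\<bar> \<le> C * N z" using assms(2) unfolding bnd_def by blast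
  have "\<bar>f z\<bar> \<le> max C 0" if "N z \<le> 1" for z
  proof -
    have "\<bar>f z\<bar> \<le> C * N z" by (rule C)
    also have "\<dots> \<le> max C 0 * N z" using nl_nonneg[OF assms(1)] by (simp add: mult_right_mono)
    also have "\<dots> \<le> max C 0 * 1" using that by (intro mult_left_mono) auto
    finally show ?thesis by simp
  qed
  thus ?thesis unfolding bdd_above_def by blast
qed

lemma dn_set_ne: assumes "normlike N" shows "{\<bar>f z\<bar> | z. N z \<le> 1} \<noteq> {}"
proof -
  have "\<bar>f 0\<bar> \<in> {\<bar>f z\<bar> | z. N z \<le> 1}" using nl_zero[OF assms] by force
  thus ?thesis by blast
qed

lemma dn_upper: "normlike N \<Longrightarrow> bnd N f \<Longrightarrow> N z \<le> 1 \<Longrightarrow> \<bar>f z\<bar> \<le> dual_norm N f"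
  unfolding dual_norm_def by (rule cSup_upper) (auto intro: dn_set_bdd)

lemma dn_least: assumes "normlike N" "\<And>z. N z \<le> 1 \<Longrightarrow> \<bar>f z\<bar> \<le> B" shows "dual_norm N f \<le> B"
  unfolding dual_norm_def by (rule cSup_least[OF dn_set_ne[OF assms(1)]]) (use assms(2) in auto)

lemma dn_nonneg: "normlike N \<Longrightarrow> bnd N f \<Longrightarrow> 0 \<le> dual_norm N f"
  using dn_upper[of N f 0] nl_zero[of N] by fastforce

lemma dn_bound:
  assumes N: "normlike N" and lin: "linear f" and b: "bnd N f"
  shows "\<bar>f z\<bar> \<le> dual_norm N f * N z"
proof (cases "N z = 0")
  case True
  obtain C where C: "\<And>z. \<bar>f z\<bar> \<le> C * N z" using b unfolding bnd_def by blast
  show ?thesis using C[of z] True by simp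
next
  case False
  hence pos: "N z > 0" using nl_nonneg[OF N, of z] by simp
  define z' where "z' = (1 / N z) *\<^sub>R z"
  have "N z' = 1" unfolding z'_def using nl_scale[OF N] pos by simp
  hence "\<bar>f z'\<bar> \<le> dual_norm N f" using dn_upper[OF N b] by simp
  moreover have "f z' = f z / N z" unfolding z'_def using linear_scale[OF lin] by simp
  ultimately have "\<bar>f z\<bar> / N z \<le> dual_norm N f" using pos by simp
  thus ?thesis using pos by (simp add: divide_le_eq)
qed

lemma dn_approx:
  assumes N: "normlike N" and lin: "linear f" and b: "bnd N f" and e: "e > 0"
  shows "\<exists>z. N z \<le> 1 \<and> dual_norm N f - e < f z"
proof -
  have "dual_norm N f - e < Sup {\<bar>f z\<bar> | z. N z \<le> 1}" using e unfolding dual_norm_def by simp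
  then obtain s where "s \<in> {\<bar>f z\<bar> | z. N z \<le> 1}" "dual_norm N f - e < s"
    using less_cSup_iff[OF dn_set_ne[OF N] dn_set_bdd[OF N b]] by blast
  then obtain z where z: "N z \<le> 1" "dual_norm N f - e < \<bar>f z\<bar>" by blast
  show ?thesis
  proof (cases "f z \<ge> 0")
    case True thus ?thesis using z by auto
  next
    case False
    have "N (-z) = N z" using nl_scale[OF N, of "-1" z] by simp
    moreover have "f (-z) = - f z" using linear_neg[OF lin] by simp
    ultimately show ?thesis using z False by (intro exI[of _ "-z"]) auto
  qed
qed

lemma ball_iff:
  assumes N: "normlike N"
  shows "f \<in> dual_ball N \<longleftrightarrow> linear f \<and> (\<forall>z. \<bar>f z\<bar> \<le> N z)"
proof
  assume f: "f \<in> dual_ball N"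
  hence lin: "linear f" and b: "bnd N f" and d: "dual_norm N f \<le> 1"
    unfolding dual_ball_def bnd_def by auto
  have "\<bar>f z\<bar> \<le> N z" for z
  proof -
    have "\<bar>f z\<bar> \<le> dual_norm N f * N z" by (rule dn_bound[OF N lin b])
    also have "\<dots> \<le> 1 * N z" using d nl_nonneg[OF N] by (intro mult_right_mono) auto
    finally show ?thesis by simp
  qed
  thus "linear f \<and> (\<forall>z. \<bar>f z\<bar> \<le> N z)" using lin by blast
next
  assume f: "linear f \<and> (\<forall>z. \<bar>f z\<bar> \<le> N z)"
  have "dual_norm N f \<le> 1" using f by (intro dn_least[OF N]) (meson order_trans)
  moreover have "\<exists>C. \<forall>z. \<bar>f z\<bar> \<le> C * N z" using f by (intro exI[of _ 1]) simp
  ultimately show "f \<in> dual_ball N" using f unfolding dual_ball_def by blast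
qed

lemma slice_iff:
  assumes N: "normlike N"
  shows "f \<in> wstar_slice N z a \<longleftrightarrow> linear f \<and> (\<forall>w. \<bar>f w\<bar> \<le> N w) \<and> f z > 1 - a"
  unfolding wstar_slice_def using ball_iff[OF N] by blast

lemma comb_lin: "(\<And>i. i < n \<Longrightarrow> linear (f i :: 'a::real_vector \<Rightarrow> real)) \<Longrightarrow> linear (\<lambda>z. \<Sum>i<n. c i * f i z)"
proof (rule linearI)
  fix a b assume l: "\<And>i. i < n \<Longrightarrow> linear (f i)"
  show "(\<Sum>i<n. c i * f i (a + b)) = (\<Sum>i<n. c i * f i a) + (\<Sum>i<n. c i * f i b)"
  proof -
    have "(\<Sum>i<n. c i * f i (a + b)) = (\<Sum>i<n. c i * f i a + c i * f i b)"
      by (rule sum.cong) (auto simp: linear_add[OF l] algebra_simps)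
    thus ?thesis by (simp add: sum.distrib)
  qed
next
  fix r :: real and a assume l: "\<And>i. i < n \<Longrightarrow> linear (f i)"
  show "(\<Sum>i<n. c i * f i (r *\<^sub>R a)) = r *\<^sub>R (\<Sum>i<n. c i * f i a)"
  proof -
    have "(\<Sum>i<n. c i * f i (r *\<^sub>R a)) = (\<Sum>i<n. r * (c i * f i a))"
      by (rule sum.cong) (auto simp: linear_scale[OF l])
    thus ?thesis by (simp add: sum_distrib_left)
  qed
qed

lemma comb_le:
  assumes N: "normlike N" and c: "\<forall>i<n. c i \<ge> 0" "(\<Sum>i<n. c i) = 1"
    and f: "\<forall>i<n. \<forall>w. \<bar>f i w\<bar> \<le> N w"
  shows "\<bar>\<Sum>i<n. c i * f i z\<bar> \<le> N z"
proof -
  have "\<bar>\<Sum>i<n. c i * f i z\<bar> \<le> (\<Sum>i<n. \<bar>c i * f i z\<bar>)" by (rule sum_abs)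
  also have "\<dots> \<le> (\<Sum>i<n. c i * N z)"
    using c f by (intro sum_mono) (simp add: abs_mult mult_left_mono)
  also have "\<dots> = N z" using c by (simp add: sum_distrib_right[symmetric])
  finally show ?thesis .
qed

lemma SD2P_intro:
  fixes N :: "'z::real_vector \<Rightarrow> real"
  assumes N: "normlike N"
    and H: "\<And>n c zs al \<delta>. (n::nat) \<ge> 1 \<Longrightarrow> (\<forall>i<n. c i \<ge> 0) \<Longrightarrow> (\<Sum>i<n. c i) = 1 \<Longrightarrow>
       (\<forall>i<n. N (zs i) = 1 \<and> al i > 0) \<Longrightarrow> \<delta> > 0 \<Longrightarrow>
       \<exists>f f'. (\<forall>i<n. f i \<in> wstar_slice N (zs i) (al i) \<and> f' i \<in> wstar_slice N (zs i) (al i)) \<and>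
         2 - \<delta> < dual_norm N (\<lambda>z. (\<Sum>i<n. c i * f i z) - (\<Sum>i<n. c i * f' i z))"
  shows "wstar_SD2P N"
  unfolding wstar_SD2P_def
proof (intro allI impI)
  fix n :: nat and c :: "nat \<Rightarrow> real" and zs :: "nat \<Rightarrow> 'z" and al :: "nat \<Rightarrow> real"
  assume A: "1 \<le> n \<and> (\<forall>i<n. 0 \<le> c i) \<and> (\<Sum>i<n. c i) = 1 \<and> (\<forall>i<n. N (zs i) = 1 \<and> 0 < al i)"
  define S where "S = comb_sets n c (\<lambda>i. wstar_slice N (zs i) (al i))"
  define D where "D = {dual_norm N (\<lambda>z. g z - h z) | g h. g \<in> S \<and> h \<in> S}"
  have memS: "linear g \<and> (\<forall>z. \<bar>g z\<bar> \<le> N z)" if gS: "g \<in> S" for g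
  proof -
    obtain f where g: "g = (\<lambda>z. \<Sum>i<n. c i * f i z)" and f: "\<forall>i<n. f i \<in> wstar_slice N (zs i) (al i)"
      using gS unfolding S_def comb_sets_def by blast
    have "linear g" unfolding g by (rule comb_lin) (use f slice_iff[OF N] in blast)
    moreover have "\<forall>z. \<bar>g z\<bar> \<le> N z" unfolding g
      using comb_le[OF N, of n c f] A f slice_iff[OF N] by blast
    ultimately show ?thesis by blast
  qed
  have le2: "d \<le> 2" if dD: "d \<in> D" for d
  proof -
    obtain g h where d: "d = dual_norm N (\<lambda>z. g z - h z)" "g \<in> S" "h \<in> S" using dD D_def by blast
    show ?thesis unfolding d(1)
    proof (rule dn_least[OF N])
      fix z assume "N z \<le> 1"
      thus "\<bar>g z - h z\<bar> \<le> 2" using memS[OF d(2)] memS[OF d(3)]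
        by (smt (verit) abs_triangle_ineq4)
    qed
  qed
  have big: "\<exists>d\<in>D. 2 - \<delta> < d" if dpos: "\<delta> > 0" for \<delta>
  proof -
    obtain f f' where ff: "\<forall>i<n. f i \<in> wstar_slice N (zs i) (al i) \<and> f' i \<in> wstar_slice N (zs i) (al i)"
      and gt: "2 - \<delta> < dual_norm N (\<lambda>z. (\<Sum>i<n. c i * f i z) - (\<Sum>i<n. c i * f' i z))"
      using H[of n c zs al \<delta>] A dpos by blast
    define g where "g = (\<lambda>z. \<Sum>i<n. c i * f i z)"
    define h where "h = (\<lambda>z. \<Sum>i<n. c i * f' i z)"
    have "g \<in> S" "h \<in> S"
      unfolding S_def comb_sets_def g_def h_def using ff by blast+
    hence "dual_norm N (\<lambda>z. g z - h z) \<in> D" unfolding D_def by blast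
    moreover have "(\<lambda>z. g z - h z) = (\<lambda>z. (\<Sum>i<n. c i * f i z) - (\<Sum>i<n. c i * f' i z))"
      unfolding g_def h_def by simp
    ultimately show ?thesis using gt by auto
  qed
  have Dne: "D \<noteq> {}" using big[of 1] by auto
  have "Sup D \<le> 2" by (rule cSup_least[OF Dne]) (use le2 in blast)
  moreover have "Sup D \<ge> 2"
  proof (rule ccontr)
    assume "\<not> Sup D \<ge> 2"
    then obtain d where "d \<in> D" "2 - (2 - Sup D) < d" using big[of "2 - Sup D"] by auto
    moreover have "d \<le> Sup D" by (rule cSup_upper[OF \<open>d \<in> D\<close>]) (use le2 in \<open>auto simp: bdd_above_def\<close>)
    ultimately show False by simp
  qed
  ultimately show "dual_diam N S = 2" unfolding dual_diam_def D_def[symmetric] by simp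
qed

lemma SD2P_use:
  assumes SD: "wstar_SD2P N" and N: "normlike N"
    and A: "(n::nat) \<ge> 1" "\<forall>i<n. c i \<ge> 0" "(\<Sum>i<n. c i) = 1" "\<forall>i<n. N (zs i) = 1 \<and> al i > 0"
    and ne: "\<forall>i<n. \<exists>f. f \<in> wstar_slice N (zs i) (al i)"
    and d: "\<delta> > 0"
  shows "\<exists>f f'. (\<forall>i<n. f i \<in> wstar_slice N (zs i) (al i) \<and> f' i \<in> wstar_slice N (zs i) (al i)) \<and>
         2 - \<delta> < dual_norm N (\<lambda>z. (\<Sum>i<n. c i * f i z) - (\<Sum>i<n. c i * f' i z))"
proof -
  define S where "S = comb_sets n c (\<lambda>i. wstar_slice N (zs i) (al i))"
  define D where "D = {dual_norm N (\<lambda>z. g z - h z) | g h. g \<in> S \<and> h \<in> S}"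
  have "Sup D = 2" using SD A unfolding wstar_SD2P_def dual_diam_def S_def D_def by blast
  obtain f0 where f0: "\<forall>i<n. f0 i \<in> wstar_slice N (zs i) (al i)" using ne by metis
  have "(\<lambda>z. \<Sum>i<n. c i * f0 i z) \<in> S" unfolding S_def comb_sets_def using f0 by blast
  hence Dne: "D \<noteq> {}" unfolding D_def by blast
  have memS: "linear g \<and> (\<forall>z. \<bar>g z\<bar> \<le> N z)" if gS: "g \<in> S" for g
  proof -
    obtain f where g: "g = (\<lambda>z. \<Sum>i<n. c i * f i z)" and f: "\<forall>i<n. f i \<in> wstar_slice N (zs i) (al i)"
      using gS unfolding S_def comb_sets_def by blast
    have "linear g" unfolding g by (rule comb_lin) (use f slice_iff[OF N] in blast)
    moreover have "\<forall>z. \<bar>g z\<bar> \<le> N z" unfolding g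
      using comb_le[OF N, of n c f] A f slice_iff[OF N] by blast
    ultimately show ?thesis by blast
  qed
  have le2: "d \<le> 2" if dD: "d \<in> D" for d
  proof -
    obtain g h where d: "d = dual_norm N (\<lambda>z. g z - h z)" "g \<in> S" "h \<in> S" using dD D_def by blast
    show ?thesis unfolding d(1)
    proof (rule dn_least[OF N])
      fix z assume "N z \<le> 1"
      thus "\<bar>g z - h z\<bar> \<le> 2" using memS[OF d(2)] memS[OF d(3)]
        by (smt (verit) abs_triangle_ineq4)
    qed
  qed
  have "2 - \<delta> < Sup D" using \<open>Sup D = 2\<close> d by simp
  then obtain x where "x \<in> D" "2 - \<delta> < x"
    using less_cSup_iff[OF Dne] le2 by (auto simp: bdd_above_def)
  then obtain g h where gh: "g \<in> S" "h \<in> S" "2 - \<delta> < dual_norm N (\<lambda>z. g z - h z)"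
    unfolding D_def by blast
  obtain f where g: "g = (\<lambda>z. \<Sum>i<n. c i * f i z)" and f: "\<forall>i<n. f i \<in> wstar_slice N (zs i) (al i)"
    using gh(1) unfolding S_def comb_sets_def by blast
  obtain f' where h: "h = (\<lambda>z. \<Sum>i<n. c i * f' i z)" and f': "\<forall>i<n. f' i \<in> wstar_slice N (zs i) (al i)"
    using gh(2) unfolding S_def comb_sets_def by blast
  show ?thesis using f f' gh(3) unfolding g h by blast
qed



lemma nl_norm: "normlike (norm :: 'a::real_normed_vector \<Rightarrow> real)"
  unfolding normlike_def by simp

lemma nl_sum1: "normlike (norm_sum1 :: 'a::real_normed_vector \<times> 'b::real_normed_vector \<Rightarrow> real)"
  unfolding normlike_def norm_sum1_def by (simp add: distrib_left)

lemma nl_suminf: "normlike (norm_suminf :: 'a::real_normed_vector \<times> 'b::real_normed_vector \<Rightarrow> real)"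
  unfolding normlike_def norm_suminf_def by (simp add: max_mult_distrib_left le_max_iff_disj)

lemma lin_fst: "linear f \<Longrightarrow> linear (\<lambda>w. f (fst w))"
  by (rule linearI) (simp_all add: linear_add linear_scale)
lemma lin_snd: "linear f \<Longrightarrow> linear (\<lambda>w. f (snd w))"
  by (rule linearI) (simp_all add: linear_add linear_scale)
lemma lin_r1: "linear h \<Longrightarrow> linear (\<lambda>u. h (u, 0))"
proof (rule linearI)
  fix a b assume "linear h"
  show "h (a + b, 0) = h (a, 0) + h (b, 0)" using linear_add[OF \<open>linear h\<close>, of "(a,0)" "(b,0)"] by simp
next
  fix r :: real and a assume "linear h"
  show "h (r *\<^sub>R a, 0) = r *\<^sub>R h (a, 0)" using linear_scale[OF \<open>linear h\<close>, of r "(a,0)"] by simp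
qed
lemma lin_r2: "linear h \<Longrightarrow> linear (\<lambda>v. h (0, v))"
proof (rule linearI)
  fix a b assume "linear h"
  show "h (0, a + b) = h (0, a) + h (0, b)" using linear_add[OF \<open>linear h\<close>, of "(0,a)" "(0,b)"] by simp
next
  fix r :: real and a assume "linear h"
  show "h (0, r *\<^sub>R a) = r *\<^sub>R h (0, a)" using linear_scale[OF \<open>linear h\<close>, of r "(0,a)"] by simp
qed
lemma lin_split: "linear h \<Longrightarrow> h (u, v) = h (u, 0) + h (0, v)"
  using linear_add[of h "(u,0)" "(0,v)"] by simp

lemma sum_split:
  assumes "\<forall>i<n. linear (h i)"
  shows "(\<Sum>i<n. c i * h i (u,v)) = (\<Sum>i<n. c i * h i (u,0)) + (\<Sum>i<n. c i * (h i (0,v) :: real))"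
proof -
  have "(\<Sum>i<n. c i * h i (u,v)) = (\<Sum>i<n. c i * h i (u,0) + c i * h i (0,v))"
  proof (rule sum.cong)
    fix i assume "i \<in> {..<n}"
    hence "h i (u,v) = h i (u,0) + h i (0,v)" using assms lin_split by blast
    thus "c i * h i (u,v) = c i * h i (u,0) + c i * h i (0,v)" by (simp add: distrib_left)
  qed simp
  thus ?thesis by (simp add: sum.distrib)
qed

lemma diff_props:
  assumes N: "normlike N" and c: "\<forall>i<n. c i \<ge> 0" "(\<Sum>i<n. c i) = 1"
    and f: "\<forall>i<n. linear (f i) \<and> (\<forall>w. \<bar>f i w\<bar> \<le> N w)"
    and f': "\<forall>i<n. linear (f' i) \<and> (\<forall>w. \<bar>f' i w\<bar> \<le> N w)"
  shows "linear (\<lambda>z. (\<Sum>i<n. c i * f i z) - (\<Sum>i<n. c i * f' i z)) \<and>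
         bnd N (\<lambda>z. (\<Sum>i<n. c i * f i z) - (\<Sum>i<n. c i * f' i z))"
proof
  show "linear (\<lambda>z. (\<Sum>i<n. c i * f i z) - (\<Sum>i<n. c i * f' i z))"
    by (intro linear_compose_sub comb_lin) (use f f' in auto)
  have "\<bar>(\<Sum>i<n. c i * f i z) - (\<Sum>i<n. c i * f' i z)\<bar> \<le> 2 * N z" for z
    using comb_le[OF N c, of f z] comb_le[OF N c, of f' z] f f' by (smt (verit))
  thus "bnd N (\<lambda>z. (\<Sum>i<n. c i * f i z) - (\<Sum>i<n. c i * f' i z))" unfolding bnd_def by blast
qed

lemma dn_ge_point: "normlike N \<Longrightarrow> bnd N g \<Longrightarrow> N z \<le> 1 \<Longrightarrow> g z \<le> dual_norm N g"
  using dn_upper[of N g z] by linarith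

lemma unit_norming:
  fixes z :: "'a::real_normed_vector"
  assumes "norm z = 1"
  shows "\<exists>f. linear f \<and> (\<forall>u. \<bar>f u\<bar> \<le> norm u) \<and> f z = 1"
  using HB_norming[of z] assms by auto

lemma exists_unit:
  assumes "\<exists>x::'a::real_normed_vector. x \<noteq> 0" shows "\<exists>x::'a. norm x = 1"
proof -
  obtain x :: 'a where "x \<noteq> 0" using assms by blast
  thus ?thesis by (intro exI[of _ "(1 / norm x) *\<^sub>R x"]) simp
qed



lemma parta:
  assumes SD: "wstar_SD2P (norm :: 'a::real_normed_vector \<Rightarrow> real)"
    and Xn: "\<exists>x::'a. x \<noteq> 0"
  shows "wstar_SD2P (norm_sum1 :: 'a \<times> 'b::real_normed_vector \<Rightarrow> real)"
proof (rule SD2P_intro[OF nl_sum1])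
  fix n :: nat and c :: "nat \<Rightarrow> real" and zs :: "nat \<Rightarrow> 'a \<times> 'b" and al :: "nat \<Rightarrow> real" and \<delta> :: real
  assume n: "n \<ge> 1" and c0: "\<forall>i<n. c i \<ge> 0" and c1: "(\<Sum>i<n. c i) = 1"
    and zs: "\<forall>i<n. norm_sum1 (zs i) = 1 \<and> al i > 0" and d: "\<delta> > 0"
  obtain x0 :: 'a where x0: "norm x0 = 1" using exists_unit[OF Xn] by blast
  have "\<exists>g. \<forall>i. linear (g i) \<and> (\<forall>u. \<bar>g i u\<bar> \<le> norm u) \<and> g i (snd (zs i)) = norm (snd (zs i))"
    by (rule choice) (use HB_norming in blast)
  then obtain g where gl: "\<And>i. linear (g i)" and gb: "\<And>i u. \<bar>g i u\<bar> \<le> norm u"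
    and gz: "\<And>i. g i (snd (zs i)) = norm (snd (zs i))" by blast
  define xs' where "xs' i = (if fst (zs i) = 0 then x0 else (1 / norm (fst (zs i))) *\<^sub>R fst (zs i))" for i
  define al' where "al' i = (if fst (zs i) = 0 then 1 else al i / norm (fst (zs i)))" for i
  have valid: "\<forall>i<n. norm (xs' i) = 1 \<and> al' i > 0"
    using zs x0 unfolding xs'_def al'_def by auto
  have ne: "\<forall>i<n. \<exists>f. f \<in> wstar_slice norm (xs' i) (al' i)"
  proof (intro allI impI)
    fix i assume i: "i < n"
    obtain f where f: "linear f" "\<forall>u. \<bar>f u\<bar> \<le> norm u" "f (xs' i) = 1"
      using unit_norming[of "xs' i"] valid i by blast
    hence "f \<in> wstar_slice norm (xs' i) (al' i)" unfolding slice_iff[OF nl_norm] using valid i by auto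
    thus "\<exists>f. f \<in> wstar_slice norm (xs' i) (al' i)" by blast
  qed
  have d2: "\<delta>/2 > 0" using d by simp
  obtain f f' where ff: "\<forall>i<n. f i \<in> wstar_slice norm (xs' i) (al' i) \<and> f' i \<in> wstar_slice norm (xs' i) (al' i)"
    and gt: "2 - \<delta>/2 < dual_norm norm (\<lambda>x. (\<Sum>i<n. c i * f i x) - (\<Sum>i<n. c i * f' i x))"
    using SD2P_use[OF SD nl_norm n c0 c1 valid ne d2] by blast
  have fp: "\<forall>i<n. linear (f i) \<and> (\<forall>w. \<bar>f i w\<bar> \<le> norm w) \<and> f i (xs' i) > 1 - al' i"
    and fp': "\<forall>i<n. linear (f' i) \<and> (\<forall>w. \<bar>f' i w\<bar> \<le> norm w) \<and> f' i (xs' i) > 1 - al' i"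
    using ff slice_iff[OF nl_norm] by blast+
  have DP: "linear (\<lambda>x. (\<Sum>i<n. c i * f i x) - (\<Sum>i<n. c i * f' i x)) \<and> bnd norm (\<lambda>x. (\<Sum>i<n. c i * f i x) - (\<Sum>i<n. c i * f' i x))"
    using diff_props[OF nl_norm c0 c1, of f f'] fp fp' by blast
  obtain u where u1: "norm u \<le> 1"
    and uv: "dual_norm norm (\<lambda>x. (\<Sum>i<n. c i * f i x) - (\<Sum>i<n. c i * f' i x)) - \<delta>/2
             < (\<Sum>i<n. c i * f i u) - (\<Sum>i<n. c i * f' i u)"
    using dn_approx[OF nl_norm _ _ d2] DP by blast
  have hslice: "(\<lambda>w. k (fst w) + g i (snd w)) \<in> wstar_slice norm_sum1 (zs i) (al i)"
    if lk: "linear k" and bk: "\<forall>w. \<bar>k w\<bar> \<le> norm w" and sk: "k (xs' i) > 1 - al' i" and i: "i < n" for k i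
    unfolding slice_iff[OF nl_sum1]
  proof (intro conjI allI)
    show "linear (\<lambda>w. k (fst w) + g i (snd w))"
      by (intro linear_compose_add lin_fst lin_snd lk gl)
    fix w :: "'a \<times> 'b"
    have "\<bar>k (fst w)\<bar> \<le> norm (fst w)" using bk by blast
    moreover have "\<bar>g i (snd w)\<bar> \<le> norm (snd w)" by (rule gb)
    ultimately show "\<bar>k (fst w) + g i (snd w)\<bar> \<le> norm_sum1 w" unfolding norm_sum1_def by linarith
  next
    have s1: "norm (fst (zs i)) + norm (snd (zs i)) = 1" using zs i unfolding norm_sum1_def by simp
    have ai: "al i > 0" using zs i by simp
    show "k (fst (zs i)) + g i (snd (zs i)) > 1 - al i"
    proof (cases "fst (zs i) = 0")
      case True
      thus ?thesis using s1 ai gz[of i] linear_0[OF lk] by simp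
    next
      case False
      hence np: "norm (fst (zs i)) > 0" by simp
      have "k (xs' i) = k (fst (zs i)) / norm (fst (zs i))"
        unfolding xs'_def using False linear_scale[OF lk] by simp
      moreover have "al' i = al i / norm (fst (zs i))" unfolding al'_def using False by simp
      ultimately have "k (fst (zs i)) / norm (fst (zs i)) > 1 - al i / norm (fst (zs i))" using sk by simp
      hence "k (fst (zs i)) > norm (fst (zs i)) - al i" using np by (simp add: field_simps)
      thus ?thesis using s1 gz[of i] by simp
    qed
  qed
  define h where "h i = (\<lambda>w. f i (fst w) + g i (snd w))" for i
  define h' where "h' i = (\<lambda>w. f' i (fst w) + g i (snd w))" for i
  have hs: "\<forall>i<n. h i \<in> wstar_slice norm_sum1 (zs i) (al i) \<and> h' i \<in> wstar_slice norm_sum1 (zs i) (al i)"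
    unfolding h_def h'_def using hslice fp fp' by blast
  have hp: "\<forall>i<n. linear (h i) \<and> (\<forall>w. \<bar>h i w\<bar> \<le> norm_sum1 w)"
    and hp': "\<forall>i<n. linear (h' i) \<and> (\<forall>w. \<bar>h' i w\<bar> \<le> norm_sum1 w)"
    using hs slice_iff[OF nl_sum1] by blast+
  have val: "(\<Sum>i<n. c i * h i (u,0)) - (\<Sum>i<n. c i * h' i (u,0)) = (\<Sum>i<n. c i * f i u) - (\<Sum>i<n. c i * f' i u)"
    unfolding h_def h'_def using linear_0[OF gl] by simp
  have "norm_sum1 (u, 0::'b) \<le> 1" using u1 unfolding norm_sum1_def by simp
  hence "(\<Sum>i<n. c i * h i (u,0)) - (\<Sum>i<n. c i * h' i (u,0))
        \<le> dual_norm norm_sum1 (\<lambda>w. (\<Sum>i<n. c i * h i w) - (\<Sum>i<n. c i * h' i w))"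
    using dn_ge_point[OF nl_sum1] diff_props[OF nl_sum1 c0 c1 hp hp'] by blast
  hence "2 - \<delta> < dual_norm norm_sum1 (\<lambda>w. (\<Sum>i<n. c i * h i w) - (\<Sum>i<n. c i * h' i w))"
    using gt uv val by linarith
  thus "\<exists>f f'. (\<forall>i<n. f i \<in> wstar_slice norm_sum1 (zs i) (al i) \<and> f' i \<in> wstar_slice norm_sum1 (zs i) (al i)) \<and>
         2 - \<delta> < dual_norm norm_sum1 (\<lambda>z. (\<Sum>i<n. c i * f i z) - (\<Sum>i<n. c i * f' i z))"
    using hs by blast
qed



lemma rpow_inv: "0 \<le> x \<Longrightarrow> p > 0 \<Longrightarrow> (x powr p) powr (1/p) = (x::real)"
  by (simp add: powr_powr powr_one)

lemma nl_sump: "p > 0 \<Longrightarrow> normlike (norm_sump p :: 'a::real_normed_vector \<times> 'b::real_normed_vector \<Rightarrow> real)"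
  unfolding normlike_def norm_sump_def
proof (intro conjI allI)
  fix c :: real and z :: "'a \<times> 'b" assume p: "p > 0"
  have "(norm (fst (c *\<^sub>R z)) powr p + norm (snd (c *\<^sub>R z)) powr p)
      = \<bar>c\<bar> powr p * (norm (fst z) powr p + norm (snd z) powr p)"
    by (simp add: powr_mult distrib_left)
  hence "(norm (fst (c *\<^sub>R z)) powr p + norm (snd (c *\<^sub>R z)) powr p) powr (1/p)
      = (\<bar>c\<bar> powr p) powr (1/p) * (norm (fst z) powr p + norm (snd z) powr p) powr (1/p)"
    by (simp add: powr_mult)
  also have "(\<bar>c\<bar> powr p) powr (1/p) = \<bar>c\<bar>" using rpow_inv[of "\<bar>c\<bar>" p] p by simp
  finally show "(norm (fst (c *\<^sub>R z)) powr p + norm (snd (c *\<^sub>R z)) powr p) powr (1/p)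
      = \<bar>c\<bar> * (norm (fst z) powr p + norm (snd z) powr p) powr (1/p)" .
qed simp

lemma sump_fst: "p > 0 \<Longrightarrow> norm_sump p (u, 0::'b::real_normed_vector) = norm (u::'a::real_normed_vector)"
  unfolding norm_sump_def by (simp add: rpow_inv)
lemma sump_snd: "p > 0 \<Longrightarrow> norm_sump p (0::'a::real_normed_vector, v) = norm (v::'b::real_normed_vector)"
  unfolding norm_sump_def by (simp add: rpow_inv)
lemma sump_ge_fst: "p > 0 \<Longrightarrow> norm u \<le> norm_sump p (u, v)"
  unfolding norm_sump_def using powr_mono2[of "1/p" "norm u powr p" "norm u powr p + norm v powr p"]
  by (simp add: rpow_inv)
lemma sump_ge_snd: "p > 0 \<Longrightarrow> norm v \<le> norm_sump p (u, v)"
  unfolding norm_sump_def using powr_mono2[of "1/p" "norm v powr p" "norm u powr p + norm v powr p"]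
  by (simp add: rpow_inv)

lemma small_real:
  fixes p \<epsilon> s A B n :: real
  assumes p: "p > 1" and e: "\<epsilon> > 0" and s: "s = (\<epsilon>/2) powr (1/(p-1))"
    and A: "A > 1 - s * \<epsilon> / 2" and n: "0 \<le> n" "n \<le> 1"
    and H: "A + s * B \<le> (1 + (s * n) powr p) powr (1/p)"
  shows "B < \<epsilon>"
proof -
  have spos: "s > 0" using s e by simp
  have sp1: "s powr (p - 1) = \<epsilon>/2" unfolding s using p e by (simp add: powr_powr)
  have sp: "s powr p = s * (\<epsilon>/2)"
  proof -
    have "s powr p = s powr ((p - 1) + 1)" by simp
    also have "\<dots> = s powr (p-1) * s powr 1" by (rule powr_add)
    finally show ?thesis using sp1 spos by simp
  qed
  have "(s * n) powr p \<le> s powr p" using powr_mono2[of p "s*n" s] p spos n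
    by (simp add: mult_left_le)
  hence t0: "(s * n) powr p \<le> s * (\<epsilon>/2)" using sp by simp
  have "(1 + (s * n) powr p) powr (1/p) \<le> (1 + (s * n) powr p) powr 1"
    using p by (intro powr_mono) auto
  also have "\<dots> = 1 + (s * n) powr p" by simp
  finally have "A + s * B \<le> 1 + s * (\<epsilon>/2)" using H t0 by linarith
  hence "s * B < s * \<epsilon>" using A by (simp add: algebra_simps)
  thus ?thesis using spos by simp
qed

lemma sum_bound:
  fixes a b p :: real
  assumes p: "p > 0" and a: "a \<ge> 0" and b: "b \<ge> 0" and S: "a powr p + b powr p \<le> 1"
  shows "a + b \<le> 1 + (1/2) powr (1/p)"
proof -
  have mi: "min a b powr p \<le> 1/2"
  proof -
    have "min a b powr p \<le> a powr p" "min a b powr p \<le> b powr p"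
      using powr_mono2[of p "min a b" a] powr_mono2[of p "min a b" b] p a b by auto
    thus ?thesis using S by linarith
  qed
  have "a powr p \<le> 1" "b powr p \<le> 1" using S powr_ge_zero[of a p] powr_ge_zero[of b p] by linarith+
  hence ma: "max a b powr p \<le> 1" by (auto simp: max_def)
  have "min a b = (min a b powr p) powr (1/p)" using rpow_inv[of "min a b" p] a b p by simp
  also have "\<dots> \<le> (1/2) powr (1/p)" using powr_mono2[of "1/p" "min a b powr p" "1/2"] mi p by simp
  finally have 1: "min a b \<le> (1/2) powr (1/p)" .
  have "max a b = (max a b powr p) powr (1/p)" using rpow_inv[of "max a b" p] a b p by simp
  also have "\<dots> \<le> 1 powr (1/p)" using powr_mono2[of "1/p" "max a b powr p" 1] ma p by simp
  finally have 2: "max a b \<le> 1" by simp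
  have "a + b = min a b + max a b" by (simp add: min_def max_def)
  thus ?thesis using 1 2 by linarith
qed

lemma scale_bound:
  fixes k :: "'a::real_normed_vector \<Rightarrow> real"
  assumes lk: "linear k" and H: "\<And>v. norm v \<le> 1 \<Longrightarrow> k v < e"
  shows "\<bar>k v\<bar> \<le> e * norm v"
proof (cases "v = 0")
  case True thus ?thesis using linear_0[OF lk] by simp
next
  case False
  define v' where "v' = (1 / norm v) *\<^sub>R v"
  have n1: "norm v' = 1" "norm (-v') = 1" using False unfolding v'_def by auto
  have "k v' = k v / norm v" unfolding v'_def using linear_scale[OF lk] by simp
  moreover have "k (-v') = - (k v / norm v)" using linear_neg[OF lk, of v'] calculation by simp
  ultimately have "\<bar>k v / norm v\<bar> \<le> e" using H[of v'] H[of "-v'"] n1 by auto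
  thus ?thesis using False by (simp add: divide_le_eq abs_div mult.commute)
qed

lemma peak_small1:
  fixes h :: "'a::real_normed_vector \<times> 'b::real_normed_vector \<Rightarrow> real" and x0 :: 'a
  assumes p: "p > 1" and e: "\<epsilon> > 0" and s: "s = (\<epsilon>/2) powr (1/(p-1))"
    and lh: "linear h" and bh: "\<forall>w. \<bar>h w\<bar> \<le> norm_sump p w"
    and pk: "h (x0, 0) > 1 - s * \<epsilon> / 2" and x0: "norm x0 = 1"
  shows "\<bar>h (0, v)\<bar> \<le> \<epsilon> * norm v"
proof (rule scale_bound[OF lin_r2[OF lh]])
  fix v :: 'b assume v1: "norm v \<le> 1"
  have spos: "s > 0" using s e by simp
  have "h (x0, s *\<^sub>R v) = h (x0, 0) + s * h (0, v)"
    using lin_split[OF lh, of x0 "s *\<^sub>R v"] linear_scale[OF lin_r2[OF lh], of s v] by simp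
  moreover have "h (x0, s *\<^sub>R v) \<le> norm_sump p (x0, s *\<^sub>R v)" using bh by (meson abs_ge_self order_trans)
  moreover have "norm_sump p (x0, s *\<^sub>R v) = (1 + (s * norm v) powr p) powr (1/p)"
    unfolding norm_sump_def using x0 spos by simp
  ultimately have "h (x0, 0) + s * h (0, v) \<le> (1 + (s * norm v) powr p) powr (1/p)" by simp
  thus "h (0, v) < \<epsilon>" using small_real[OF p e s pk _ v1] by simp
qed

lemma peak_small2:
  fixes h :: "'a::real_normed_vector \<times> 'b::real_normed_vector \<Rightarrow> real" and y0 :: 'b
  assumes p: "p > 1" and e: "\<epsilon> > 0" and s: "s = (\<epsilon>/2) powr (1/(p-1))"
    and lh: "linear h" and bh: "\<forall>w. \<bar>h w\<bar> \<le> norm_sump p w"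
    and pk: "h (0, y0) > 1 - s * \<epsilon> / 2" and y0: "norm y0 = 1"
  shows "\<bar>h (u, 0)\<bar> \<le> \<epsilon> * norm u"
proof (rule scale_bound[OF lin_r1[OF lh]])
  fix u :: 'a assume u1: "norm u \<le> 1"
  have spos: "s > 0" using s e by simp
  have "h (s *\<^sub>R u, y0) = h (0, y0) + s * h (u, 0)"
    using lin_split[OF lh, of "s *\<^sub>R u" y0] linear_scale[OF lin_r1[OF lh], of s u] by simp
  moreover have "h (s *\<^sub>R u, y0) \<le> norm_sump p (s *\<^sub>R u, y0)" using bh by (meson abs_ge_self order_trans)
  moreover have "norm_sump p (s *\<^sub>R u, y0) = (1 + (s * norm u) powr p) powr (1/p)"
    unfolding norm_sump_def using y0 spos by (simp add: add.commute)
  ultimately have "h (0, y0) + s * h (u, 0) \<le> (1 + (s * norm u) powr p) powr (1/p)" by simp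
  thus "h (u, 0) < \<epsilon>" using small_real[OF p e s pk _ u1] by simp
qed

lemma partb:
  assumes p: "p > 1" and Xn: "\<exists>x::'a::real_normed_vector. x \<noteq> 0" and Yn: "\<exists>y::'b::real_normed_vector. y \<noteq> 0"
  shows "\<not> wstar_SD2P (norm_sump p :: 'a \<times> 'b \<Rightarrow> real)"
proof
  assume SD: "wstar_SD2P (norm_sump p :: 'a \<times> 'b \<Rightarrow> real)"
  have p0: "p > 0" using p by simp
  note NL = nl_sump[OF p0, where 'a='a and 'b='b]
  obtain x0 :: 'a where x0: "norm x0 = 1" using exists_unit[OF Xn] by blast
  obtain y0 :: 'b where y0: "norm y0 = 1" using exists_unit[OF Yn] by blast
  define K where "K = 1 + (1/2::real) powr (1/p)"
  have "(1/2::real) powr (1/p) < 1 powr (1/p)" using p0 by (intro powr_less_mono2) auto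
  hence K2: "K < 2" unfolding K_def by simp
  define \<epsilon> where "\<epsilon> = (2 - K) / 4"
  have e: "\<epsilon> > 0" using K2 \<epsilon>_def by simp
  have eK: "\<epsilon> * K < \<epsilon> * 2" using K2 e by simp
  have Kbd0: "(1 + \<epsilon>) * K = K + \<epsilon> * K" by (simp add: algebra_simps)
  have Kbd: "(1 + \<epsilon>) * K < 2" using Kbd0 eK K2 \<epsilon>_def by argo
  define s where "s = (\<epsilon>/2) powr (1/(p-1))"
  define \<alpha> where "\<alpha> = s * \<epsilon> / 2"
  have spos: "s > 0" using s_def e by simp
  have apos: "\<alpha> > 0" unfolding \<alpha>_def using spos e by simp
  define zs where "zs i = (if i = 0 then (x0, 0::'b) else (0::'a, y0))" for i :: nat
  define c where "c i = (1/2::real)" for i :: nat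
  define al where "al i = \<alpha>" for i :: nat
  have nx0: "norm_sump p (x0, 0::'b) = 1" using sump_fst[OF p0, of x0] x0 by simp
  have ny0: "norm_sump p (0::'a, y0) = 1" using sump_snd[OF p0, of y0] y0 by simp
  have valid: "(2::nat) \<ge> 1 \<and> (\<forall>i<2. c i \<ge> 0) \<and> (\<Sum>i<2. c i) = 1 \<and> (\<forall>i<2. norm_sump p (zs i) = 1 \<and> al i > 0)"
    unfolding c_def zs_def al_def using nx0 ny0 apos by auto
  define Sl where "Sl i = wstar_slice (norm_sump p) (zs i) (al i)" for i
  define CS where "CS = comb_sets 2 c Sl"
  define D where "D = {dual_norm (norm_sump p) (\<lambda>z. g z - h z) | g h. g \<in> CS \<and> h \<in> CS}"
  have "Sup D = 2" using SD valid unfolding wstar_SD2P_def dual_diam_def D_def CS_def Sl_def by blast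
  obtain f where f: "linear f" "\<forall>u. \<bar>f u\<bar> \<le> norm u" "f x0 = 1" using unit_norming[OF x0] by blast
  obtain g where g: "linear g" "\<forall>u. \<bar>g u\<bar> \<le> norm u" "g y0 = 1" using unit_norming[OF y0] by blast
  define F where "F i = (if i = 0 then (\<lambda>w::'a\<times>'b. f (fst w)) else (\<lambda>w. g (snd w)))" for i :: nat
  have "F i \<in> Sl i" for i
    unfolding Sl_def slice_iff[OF NL]
  proof (intro conjI allI)
    show "linear (F i)" unfolding F_def by (simp add: lin_fst[OF f(1)] lin_snd[OF g(1)])
    fix w :: "'a \<times> 'b"
    show "\<bar>F i w\<bar> \<le> norm_sump p w" unfolding F_def
      using f(2) g(2) sump_ge_fst[OF p0, of "fst w" "snd w"] sump_ge_snd[OF p0, of "snd w" "fst w"]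
      by (cases w) (auto intro: order_trans)
  next
    show "F i (zs i) > 1 - al i" unfolding F_def zs_def al_def using f(3) g(3) apos by auto
  qed
  hence "(\<lambda>z. \<Sum>i<2. c i * F i z) \<in> CS" unfolding CS_def comb_sets_def by blast
  hence Dne: "D \<noteq> {}" unfolding D_def by blast
  have B1: "\<bar>k (u, 0)\<bar> \<le> norm u \<and> \<bar>k (0, v)\<bar> \<le> \<epsilon> * norm v" if "k \<in> Sl 0" for k u v
  proof -
    have k: "linear k" "\<forall>w. \<bar>k w\<bar> \<le> norm_sump p w" "k (x0, 0) > 1 - s * \<epsilon> / 2"
      using that unfolding Sl_def slice_iff[OF NL] zs_def al_def \<alpha>_def by auto
    show ?thesis using k(2)[rule_format, of "(u,0)"] sump_fst[OF p0, where 'b='b, of u]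
      peak_small1[OF p e s_def k x0] by simp
  qed
  have B2: "\<bar>k (u, 0)\<bar> \<le> \<epsilon> * norm u \<and> \<bar>k (0, v)\<bar> \<le> norm v" if "k \<in> Sl 1" for k u v
  proof -
    have k: "linear k" "\<forall>w. \<bar>k w\<bar> \<le> norm_sump p w" "k (0, y0) > 1 - s * \<epsilon> / 2"
      using that unfolding Sl_def slice_iff[OF NL] zs_def al_def \<alpha>_def by auto
    show ?thesis using k(2)[rule_format, of "(0,v)"] sump_snd[OF p0, where 'a='a, of v]
      peak_small2[OF p e s_def k y0] by simp
  qed
  have lin0: "linear k" if "k \<in> Sl i" for k i using that unfolding Sl_def slice_iff[OF NL] by blast
  have le: "d \<le> (1 + \<epsilon>) * K" if "d \<in> D" for d
  proof -
    obtain G H where d: "d = dual_norm (norm_sump p) (\<lambda>z. G z - H z)" and G: "G \<in> CS" and H: "H \<in> CS"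
      using \<open>d \<in> D\<close> unfolding D_def by blast
    obtain f0 f1 where G': "G = (\<lambda>z. c 0 * f0 z + c 1 * f1 z)" and fs: "f0 \<in> Sl 0" "f1 \<in> Sl 1"
    proof -
      obtain ff where "G = (\<lambda>z. \<Sum>i<2. c i * ff i z)" "\<forall>i<2. ff i \<in> Sl i"
        using G unfolding CS_def comb_sets_def by blast
      thus ?thesis using that[of "ff 0" "ff 1"] by (simp add: numeral_2_eq_2)
    qed
    obtain h0 h1 where H': "H = (\<lambda>z. c 0 * h0 z + c 1 * h1 z)" and hs: "h0 \<in> Sl 0" "h1 \<in> Sl 1"
    proof -
      obtain ff where "H = (\<lambda>z. \<Sum>i<2. c i * ff i z)" "\<forall>i<2. ff i \<in> Sl i"
        using H unfolding CS_def comb_sets_def by blast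
      thus ?thesis using that[of "ff 0" "ff 1"] by (simp add: numeral_2_eq_2)
    qed
    show ?thesis unfolding d
    proof (rule dn_least[OF NL])
      fix z :: "'a \<times> 'b" assume z1: "norm_sump p z \<le> 1"
      obtain u v where z: "z = (u, v)" by (cases z)
      define a where "a = norm u"
      define b where "b = norm v"
      have T: "a powr p + b powr p \<le> 1"
      proof -
        define T where "T = a powr p + b powr p"
        have "T powr (1/p) \<le> 1" using z1 unfolding z T_def a_def b_def norm_sump_def by simp
        hence "(T powr (1/p)) powr p \<le> 1 powr p" using p0 by (intro powr_mono2) auto
        moreover have "(T powr (1/p)) powr p = T" using p0 unfolding T_def by (simp add: powr_powr powr_one)
        ultimately show ?thesis unfolding T_def by simp
      qed
      have ab: "a + b \<le> K" unfolding K_def by (rule sum_bound[OF p0 _ _ T]) (auto simp: a_def b_def)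
      have "(1 + \<epsilon>) * (a + b) \<le> (1 + \<epsilon>) * K" using ab e by (intro mult_left_mono) auto
      moreover have spl: "k (u, v) = k (u, 0) + k (0, v)" if "k \<in> Sl i" for k i
        using lin_split[OF lin0[OF that]] .
      moreover note B1[OF fs(1), of u v] B1[OF hs(1), of u v] B2[OF fs(2), of u v] B2[OF hs(2), of u v]
      moreover note spl[OF fs(1)] spl[OF hs(1)] spl[OF fs(2)] spl[OF hs(2)]
      ultimately show "\<bar>G z - H z\<bar> \<le> (1 + \<epsilon>) * K"
        unfolding G' H' z c_def a_def[symmetric] b_def[symmetric] by (simp add: algebra_simps) linarith
    qed
  qed
  have "Sup D \<le> (1 + \<epsilon>) * K" by (rule cSup_least[OF Dne]) (use le in blast)
  thus False using \<open>Sup D = 2\<close> Kbd by simp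
qed



lemma piece:
  fixes xs :: "nat \<Rightarrow> 'a::real_normed_vector"
  assumes SD: "wstar_SD2P (norm :: 'a \<Rightarrow> real)" and w0: "\<forall>i<n. w i \<ge> 0"
    and valid: "\<forall>i<n. norm (xs i) = 1 \<and> al i > 0"
    and ne: "\<forall>i<n. \<exists>f. f \<in> wstar_slice norm (xs i) (al i)" and d: "\<delta> > 0"
  shows "\<exists>f f' u. (\<forall>i<n. f i \<in> wstar_slice norm (xs i) (al i) \<and> f' i \<in> wstar_slice norm (xs i) (al i))
     \<and> norm u \<le> 1 \<and> (\<Sum>i<n. w i) * (2 - \<delta>) \<le> (\<Sum>i<n. w i * f i u) - (\<Sum>i<n. w i * f' i u)"
proof (cases "(\<Sum>i<n. w i) = 0")
  case True
  obtain f0 where f0: "\<forall>i<n. f0 i \<in> wstar_slice norm (xs i) (al i)" using ne by metis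
  show ?thesis using True f0 by (intro exI[of _ f0] exI[of _ f0] exI[of _ 0]) simp
next
  case False
  define A where "A = (\<Sum>i<n. w i)"
  have Apos: "A > 0" using False w0 sum_nonneg[of "{..<n}" w] unfolding A_def by force
  have n: "n \<ge> 1" using False by (cases n) auto
  define cX where "cX i = w i / A" for i
  have c0: "\<forall>i<n. cX i \<ge> 0" using w0 Apos unfolding cX_def by simp
  have c1: "(\<Sum>i<n. cX i) = 1" unfolding cX_def using Apos by (simp add: sum_divide_distrib[symmetric] A_def)
  have d2: "\<delta>/2 > 0" using d by simp
  obtain f f' where ff: "\<forall>i<n. f i \<in> wstar_slice norm (xs i) (al i) \<and> f' i \<in> wstar_slice norm (xs i) (al i)"
    and gt: "2 - \<delta>/2 < dual_norm norm (\<lambda>x. (\<Sum>i<n. cX i * f i x) - (\<Sum>i<n. cX i * f' i x))"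
    using SD2P_use[OF SD nl_norm n c0 c1 valid ne d2] by blast
  have fp: "\<forall>i<n. linear (f i) \<and> (\<forall>w. \<bar>f i w\<bar> \<le> norm w)"
    and fp': "\<forall>i<n. linear (f' i) \<and> (\<forall>w. \<bar>f' i w\<bar> \<le> norm w)"
    using ff slice_iff[OF nl_norm] by blast+
  have DP: "linear (\<lambda>x. (\<Sum>i<n. cX i * f i x) - (\<Sum>i<n. cX i * f' i x)) \<and> bnd norm (\<lambda>x. (\<Sum>i<n. cX i * f i x) - (\<Sum>i<n. cX i * f' i x))"
    using diff_props[OF nl_norm c0 c1 fp fp'] by blast
  obtain u where u1: "norm u \<le> 1"
    and uv: "dual_norm norm (\<lambda>x. (\<Sum>i<n. cX i * f i x) - (\<Sum>i<n. cX i * f' i x)) - \<delta>/2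
             < (\<Sum>i<n. cX i * f i u) - (\<Sum>i<n. cX i * f' i u)"
    using dn_approx[OF nl_norm _ _ d2] DP by blast
  have eq: "(\<Sum>i<n. w i * k i u) = A * (\<Sum>i<n. cX i * k i u)" for k :: "nat \<Rightarrow> 'a \<Rightarrow> real"
    unfolding cX_def sum_distrib_left using Apos by (intro sum.cong) auto
  have "A * (2 - \<delta>) \<le> A * ((\<Sum>i<n. cX i * f i u) - (\<Sum>i<n. cX i * f' i u))"
    using gt uv Apos by (intro mult_left_mono) auto
  also have "\<dots> = (\<Sum>i<n. w i * f i u) - (\<Sum>i<n. w i * f' i u)"
    using eq[of f] eq[of f'] by (simp add: right_diff_distrib)
  finally show ?thesis using ff u1 unfolding A_def by blast
qed

lemma partc:
  assumes SDX: "wstar_SD2P (norm :: 'a::real_normed_vector \<Rightarrow> real)"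
    and SDY: "wstar_SD2P (norm :: 'b::real_normed_vector \<Rightarrow> real)"
    and Xn: "\<exists>x::'a. x \<noteq> 0" and Yn: "\<exists>y::'b. y \<noteq> 0"
  shows "wstar_SD2P (norm_suminf :: 'a \<times> 'b \<Rightarrow> real)"
proof (rule SD2P_intro[OF nl_suminf])
  fix n :: nat and c :: "nat \<Rightarrow> real" and zs :: "nat \<Rightarrow> 'a \<times> 'b" and al :: "nat \<Rightarrow> real" and \<delta> :: real
  assume n: "n \<ge> 1" and c0: "\<forall>i<n. c i \<ge> 0" and c1: "(\<Sum>i<n. c i) = 1"
    and zs: "\<forall>i<n. norm_suminf (zs i) = 1 \<and> al i > 0" and d: "\<delta> > 0"
  obtain x0 :: 'a where x0: "norm x0 = 1" using exists_unit[OF Xn] by blast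
  obtain y0 :: 'b where y0: "norm y0 = 1" using exists_unit[OF Yn] by blast
  define I where "I i \<longleftrightarrow> norm (fst (zs i)) = 1" for i
  have yI: "norm (snd (zs i)) = 1" if "i < n" "\<not> I i" for i
    using zs that unfolding I_def norm_suminf_def by (auto simp: max_def split: if_splits)
  define xs' where "xs' i = (if I i then fst (zs i) else x0)" for i
  define alX where "alX i = (if I i then al i else 1)" for i
  define ys' where "ys' i = (if I i then y0 else snd (zs i))" for i
  define alY where "alY i = (if I i then 1 else al i)" for i
  define wX where "wX i = (if I i then c i else 0)" for i
  define wY where "wY i = (if I i then 0 else c i)" for i
  have vX: "\<forall>i<n. norm (xs' i) = 1 \<and> alX i > 0" using x0 zs unfolding xs'_def alX_def I_def by auto
  have vY: "\<forall>i<n. norm (ys' i) = 1 \<and> alY i > 0" using y0 zs yI unfolding ys'_def alY_def by auto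
  have neX: "\<forall>i<n. \<exists>f. f \<in> wstar_slice norm (xs' i) (alX i)"
  proof (intro allI impI)
    fix i assume i: "i < n"
    obtain f where f: "linear f" "\<forall>u. \<bar>f u\<bar> \<le> norm u" "f (xs' i) = 1"
      using unit_norming[of "xs' i"] vX i by blast
    hence "f \<in> wstar_slice norm (xs' i) (alX i)" unfolding slice_iff[OF nl_norm] using vX i by auto
    thus "\<exists>f. f \<in> wstar_slice norm (xs' i) (alX i)" by blast
  qed
  have neY: "\<forall>i<n. \<exists>f. f \<in> wstar_slice norm (ys' i) (alY i)"
  proof (intro allI impI)
    fix i assume i: "i < n"
    obtain f where f: "linear f" "\<forall>u. \<bar>f u\<bar> \<le> norm u" "f (ys' i) = 1"
      using unit_norming[of "ys' i"] vY i by blast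
    hence "f \<in> wstar_slice norm (ys' i) (alY i)" unfolding slice_iff[OF nl_norm] using vY i by auto
    thus "\<exists>f. f \<in> wstar_slice norm (ys' i) (alY i)" by blast
  qed
  have wX0: "\<forall>i<n. wX i \<ge> 0" and wY0: "\<forall>i<n. wY i \<ge> 0" using c0 unfolding wX_def wY_def by auto
  have d2: "\<delta>/2 > 0" using d by simp
  obtain f f' u where ff: "\<forall>i<n. f i \<in> wstar_slice norm (xs' i) (alX i) \<and> f' i \<in> wstar_slice norm (xs' i) (alX i)"
    and u1: "norm u \<le> 1" and uv: "(\<Sum>i<n. wX i) * (2 - \<delta>/2) \<le> (\<Sum>i<n. wX i * f i u) - (\<Sum>i<n. wX i * f' i u)"
    using piece[OF SDX wX0 vX neX d2] by blast
  obtain g g' v where gg: "\<forall>i<n. g i \<in> wstar_slice norm (ys' i) (alY i) \<and> g' i \<in> wstar_slice norm (ys' i) (alY i)"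
    and v1: "norm v \<le> 1" and vv: "(\<Sum>i<n. wY i) * (2 - \<delta>/2) \<le> (\<Sum>i<n. wY i * g i v) - (\<Sum>i<n. wY i * g' i v)"
    using piece[OF SDY wY0 vY neY d2] by blast
  have fp: "\<forall>i<n. linear (f i) \<and> (\<forall>w. \<bar>f i w\<bar> \<le> norm w) \<and> f i (xs' i) > 1 - alX i"
    and fp': "\<forall>i<n. linear (f' i) \<and> (\<forall>w. \<bar>f' i w\<bar> \<le> norm w) \<and> f' i (xs' i) > 1 - alX i"
    using ff slice_iff[OF nl_norm] by blast+
  have gp: "\<forall>i<n. linear (g i) \<and> (\<forall>w. \<bar>g i w\<bar> \<le> norm w) \<and> g i (ys' i) > 1 - alY i"
    and gp': "\<forall>i<n. linear (g' i) \<and> (\<forall>w. \<bar>g' i w\<bar> \<le> norm w) \<and> g' i (ys' i) > 1 - alY i"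
    using gg slice_iff[OF nl_norm] by blast+
  have hslice: "(\<lambda>w. if I i then k (fst w) else l (snd w)) \<in> wstar_slice norm_suminf (zs i) (al i)"
    if lk: "linear k" and bk: "\<forall>w. \<bar>k w\<bar> \<le> norm w" and sk: "k (xs' i) > 1 - alX i"
      and ll: "linear l" and bl: "\<forall>w. \<bar>l w\<bar> \<le> norm w" and sl: "l (ys' i) > 1 - alY i"
      and i: "i < n" for k l i
    unfolding slice_iff[OF nl_suminf]
  proof (intro conjI allI)
    show "linear (\<lambda>w. if I i then k (fst w) else l (snd w))"
      using lin_fst[OF lk] lin_snd[OF ll] by (cases "I i") auto
    fix w :: "'a \<times> 'b"
    have "\<bar>k (fst w)\<bar> \<le> norm (fst w)" using bk by blast
    moreover have "\<bar>l (snd w)\<bar> \<le> norm (snd w)" using bl by blast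
    ultimately show "\<bar>if I i then k (fst w) else l (snd w)\<bar> \<le> norm_suminf w"
      unfolding norm_suminf_def by auto
  next
    show "(if I i then k (fst (zs i)) else l (snd (zs i))) > 1 - al i"
      using sk sl unfolding xs'_def alX_def ys'_def alY_def by (cases "I i") auto
  qed
  define h where "h i = (\<lambda>w. if I i then f i (fst w) else g i (snd w))" for i
  define h' where "h' i = (\<lambda>w. if I i then f' i (fst w) else g' i (snd w))" for i
  have hs: "\<forall>i<n. h i \<in> wstar_slice norm_suminf (zs i) (al i) \<and> h' i \<in> wstar_slice norm_suminf (zs i) (al i)"
  proof (intro allI impI conjI)
    fix i assume i: "i < n"
    show "h i \<in> wstar_slice norm_suminf (zs i) (al i)" unfolding h_def
      using hslice[of "f i" i "g i"] fp gp i by blast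
    show "h' i \<in> wstar_slice norm_suminf (zs i) (al i)" unfolding h'_def
      using hslice[of "f' i" i "g' i"] fp' gp' i by blast
  qed
  have hp: "\<forall>i<n. linear (h i) \<and> (\<forall>w. \<bar>h i w\<bar> \<le> norm_suminf w)"
    and hp': "\<forall>i<n. linear (h' i) \<and> (\<forall>w. \<bar>h' i w\<bar> \<le> norm_suminf w)"
    using hs slice_iff[OF nl_suminf] by blast+
  have spl: "(\<Sum>i<n. c i * (if I i then a i else b i)) = (\<Sum>i<n. wX i * a i) + (\<Sum>i<n. wY i * b i)"
    for a b :: "nat \<Rightarrow> real"
    unfolding sum.distrib[symmetric] wX_def wY_def by (intro sum.cong) auto
  have val: "(\<Sum>i<n. c i * h i (u,v)) - (\<Sum>i<n. c i * h' i (u,v))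
     = ((\<Sum>i<n. wX i * f i u) - (\<Sum>i<n. wX i * f' i u)) + ((\<Sum>i<n. wY i * g i v) - (\<Sum>i<n. wY i * g' i v))"
    unfolding h_def h'_def fst_conv snd_conv using spl[of "\<lambda>i. f i u" "\<lambda>i. g i v"] spl[of "\<lambda>i. f' i u" "\<lambda>i. g' i v"] by linarith
  have AB: "(\<Sum>i<n. wX i) + (\<Sum>i<n. wY i) = 1"
  proof -
    have "(\<Sum>i<n. wX i + wY i) = (\<Sum>i<n. c i)" unfolding wX_def wY_def by (intro sum.cong) auto
    thus ?thesis using c1 by (simp add: sum.distrib)
  qed
  have "norm_suminf (u, v) \<le> 1" using u1 v1 unfolding norm_suminf_def by simp
  hence "(\<Sum>i<n. c i * h i (u,v)) - (\<Sum>i<n. c i * h' i (u,v))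
        \<le> dual_norm norm_suminf (\<lambda>w. (\<Sum>i<n. c i * h i w) - (\<Sum>i<n. c i * h' i w))"
    using dn_ge_point[OF nl_suminf] diff_props[OF nl_suminf c0 c1 hp hp'] by blast
  moreover have "(\<Sum>i<n. wX i) * (2 - \<delta>/2) + (\<Sum>i<n. wY i) * (2 - \<delta>/2) = 2 - \<delta>/2"
    using AB by (simp add: distrib_right[symmetric])
  ultimately have "2 - \<delta> < dual_norm norm_suminf (\<lambda>w. (\<Sum>i<n. c i * h i w) - (\<Sum>i<n. c i * h' i w))"
    using uv vv val d by linarith
  thus "\<exists>f f'. (\<forall>i<n. f i \<in> wstar_slice norm_suminf (zs i) (al i) \<and> f' i \<in> wstar_slice norm_suminf (zs i) (al i)) \<and>
         2 - \<delta> < dual_norm norm_suminf (\<lambda>z. (\<Sum>i<n. c i * f i z) - (\<Sum>i<n. c i * f' i z))"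
    using hs by blast
qed



lemma partd:
  assumes SD: "wstar_SD2P (norm_suminf :: 'a::real_normed_vector \<times> 'b::real_normed_vector \<Rightarrow> real)"
  shows "wstar_SD2P (norm :: 'a \<Rightarrow> real)"
proof (rule SD2P_intro[OF nl_norm])
  fix n :: nat and c :: "nat \<Rightarrow> real" and zs :: "nat \<Rightarrow> 'a" and al :: "nat \<Rightarrow> real" and \<delta> :: real
  assume n: "n \<ge> 1" and c0: "\<forall>i<n. c i \<ge> 0" and c1: "(\<Sum>i<n. c i) = 1"
    and zs: "\<forall>i<n. norm (zs i) = 1 \<and> al i > 0" and d: "\<delta> > 0"
  define \<epsilon> where "\<epsilon> = \<delta> / 4"
  have e: "\<epsilon> > 0" using d \<epsilon>_def by simp
  define zs' where "zs' i = (zs i, 0::'b)" for i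
  define al' where "al' i = min (al i) \<epsilon>" for i
  have valid: "\<forall>i<n. norm_suminf (zs' i) = 1 \<and> al' i > 0"
    using zs e unfolding zs'_def al'_def norm_suminf_def by auto
  have ne: "\<forall>i<n. \<exists>h. h \<in> wstar_slice norm_suminf (zs' i) (al' i)"
  proof (intro allI impI)
    fix i assume i: "i < n"
    obtain f where f: "linear f" "\<forall>u. \<bar>f u\<bar> \<le> norm u" "f (zs i) = 1"
      using unit_norming[of "zs i"] zs i by blast
    have "(\<lambda>w. f (fst w)) \<in> wstar_slice norm_suminf (zs' i) (al' i)"
      unfolding slice_iff[OF nl_suminf]
    proof (intro conjI allI)
      show "linear (\<lambda>w. f (fst w))" by (rule lin_fst[OF f(1)])
      fix w :: "'a \<times> 'b"
      show "\<bar>f (fst w)\<bar> \<le> norm_suminf w" using f(2)[rule_format, of "fst w"]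
        unfolding norm_suminf_def by linarith
    next
      show "f (fst (zs' i)) > 1 - al' i" using f(3) valid i unfolding zs'_def by auto
    qed
    thus "\<exists>h. h \<in> wstar_slice norm_suminf (zs' i) (al' i)" by blast
  qed
  obtain h h' where hh: "\<forall>i<n. h i \<in> wstar_slice norm_suminf (zs' i) (al' i) \<and> h' i \<in> wstar_slice norm_suminf (zs' i) (al' i)"
    and gt: "2 - \<epsilon> < dual_norm norm_suminf (\<lambda>w. (\<Sum>i<n. c i * h i w) - (\<Sum>i<n. c i * h' i w))"
    using SD2P_use[OF SD nl_suminf n c0 c1 valid ne e] by blast
  have hp: "\<forall>i<n. linear (h i) \<and> (\<forall>w. \<bar>h i w\<bar> \<le> norm_suminf w) \<and> h i (zs' i) > 1 - al' i"
    and hp': "\<forall>i<n. linear (h' i) \<and> (\<forall>w. \<bar>h' i w\<bar> \<le> norm_suminf w) \<and> h' i (zs' i) > 1 - al' i"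
    using hh slice_iff[OF nl_suminf] by blast+
  note DP = diff_props[OF nl_suminf c0 c1, of h h']
  obtain w where w: "norm_suminf w \<le> 1"
    and wv: "dual_norm norm_suminf (\<lambda>w. (\<Sum>i<n. c i * h i w) - (\<Sum>i<n. c i * h' i w)) - \<epsilon>
             < (\<Sum>i<n. c i * h i w) - (\<Sum>i<n. c i * h' i w)"
    using dn_approx[OF nl_suminf _ _ e] DP hp hp' by blast
  obtain u v where uv: "w = (u, v)" by (cases w)
  have u1: "norm u \<le> 1" and v1: "norm v \<le> 1" using w uv unfolding norm_suminf_def by auto
  have small: "\<bar>k (0, v)\<bar> \<le> \<epsilon>"
    if lk: "linear k" and bk: "\<forall>w. \<bar>k w\<bar> \<le> norm_suminf w" and sk: "k (zs' i) > 1 - al' i" and i: "i < n" for k i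
  proof -
    have one: "k (0, y) < \<epsilon>" if y1: "norm y \<le> 1" for y
    proof -
      have "k (zs i, y) \<le> norm_suminf (zs i, y)" using bk by (meson abs_ge_self order_trans)
      also have "norm_suminf (zs i, y) = 1" using zs i y1 unfolding norm_suminf_def by auto
      finally have A: "k (zs i, y) \<le> 1" .
      have B: "k (zs i, y) = k (zs' i) + k (0, y)" using lin_split[OF lk, of "zs i" y] unfolding zs'_def by simp
      have C: "al' i \<le> \<epsilon>" unfolding al'_def by simp
      from A B C sk show ?thesis by linarith
    qed
    have "k (0, -v) = - k (0, v)" using linear_neg[OF lk, of "(0,v)"] by simp
    thus ?thesis using one[of v] one[of "-v"] v1 by auto
  qed
  define f where "f i = (\<lambda>x. h i (x, 0))" for i
  define f' where "f' i = (\<lambda>x. h' i (x, 0))" for i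
  have fslice: "(\<lambda>x. k (x, 0)) \<in> wstar_slice norm (zs i) (al i)"
    if lk: "linear k" and bk: "\<forall>w. \<bar>k w\<bar> \<le> norm_suminf w" and sk: "k (zs' i) > 1 - al' i" and i: "i < n" for k i
    unfolding slice_iff[OF nl_norm]
  proof (intro conjI allI)
    show "linear (\<lambda>x. k (x, 0))" by (rule lin_r1[OF lk])
    fix x :: 'a
    have "norm_suminf (x, 0::'b) = norm x" by (simp add: norm_suminf_def)
    thus "\<bar>k (x, 0)\<bar> \<le> norm x" using bk by metis
  next
    have "al' i \<le> al i" unfolding al'_def by simp
    thus "k (zs i, 0) > 1 - al i" using sk unfolding zs'_def by simp
  qed
  have fs: "\<forall>i<n. f i \<in> wstar_slice norm (zs i) (al i) \<and> f' i \<in> wstar_slice norm (zs i) (al i)"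
    using fslice hp hp' unfolding f_def f'_def by blast
  have spl: "(\<Sum>i<n. c i * h i w) - (\<Sum>i<n. c i * h' i w)
     = ((\<Sum>i<n. c i * f i u) - (\<Sum>i<n. c i * f' i u)) + (\<Sum>i<n. c i * (h i (0,v) - h' i (0,v)))"
    using sum_split[of n h c u v] sum_split[of n h' c u v] hp hp' uv unfolding f_def f'_def
    by (simp add: sum_subtractf right_diff_distrib)
  have "(\<Sum>i<n. c i * (h i (0,v) - h' i (0,v))) \<le> (\<Sum>i<n. c i * (2 * \<epsilon>))"
  proof (rule sum_mono)
    fix i assume "i \<in> {..<n}"
    hence i: "i < n" by simp
    have "\<bar>h i (0,v)\<bar> \<le> \<epsilon>" using small[of "h i" i] hp i by blast
    moreover have "\<bar>h' i (0,v)\<bar> \<le> \<epsilon>" using small[of "h' i" i] hp' i by blast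
    ultimately have "h i (0,v) - h' i (0,v) \<le> 2 * \<epsilon>" by linarith
    thus "c i * (h i (0,v) - h' i (0,v)) \<le> c i * (2 * \<epsilon>)" using c0 i by (simp add: mult_left_mono)
  qed
  also have "\<dots> = 2 * \<epsilon>" using c1 by (simp add: sum_distrib_right[symmetric])
  finally have rest: "(\<Sum>i<n. c i * (h i (0,v) - h' i (0,v))) \<le> 2 * \<epsilon>" .
  have fp: "\<forall>i<n. linear (f i) \<and> (\<forall>w. \<bar>f i w\<bar> \<le> norm w)"
    and fp': "\<forall>i<n. linear (f' i) \<and> (\<forall>w. \<bar>f' i w\<bar> \<le> norm w)"
    using fs slice_iff[OF nl_norm] by blast+
  have "(\<Sum>i<n. c i * f i u) - (\<Sum>i<n. c i * f' i u)
        \<le> dual_norm norm (\<lambda>x. (\<Sum>i<n. c i * f i x) - (\<Sum>i<n. c i * f' i x))"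
    using dn_ge_point[OF nl_norm _ u1] diff_props[OF nl_norm c0 c1 fp fp'] by blast
  hence "2 - \<delta> < dual_norm norm (\<lambda>x. (\<Sum>i<n. c i * f i x) - (\<Sum>i<n. c i * f' i x))"
    using gt wv spl rest \<epsilon>_def by linarith
  thus "\<exists>f f'. (\<forall>i<n. f i \<in> wstar_slice norm (zs i) (al i) \<and> f' i \<in> wstar_slice norm (zs i) (al i)) \<and>
         2 - \<delta> < dual_norm norm (\<lambda>z. (\<Sum>i<n. c i * f i z) - (\<Sum>i<n. c i * f' i z))"
    using fs by blast
qed


theorem corollary4p10:
  assumes X_nontriv: "\<exists>x::'a::banach. x \<noteq> 0"
    and Y_nontriv: "\<exists>y::'b::banach. y \<noteq> 0"
  shows "(wstar_SD2P (norm :: 'a \<Rightarrow> real)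
            \<longrightarrow> wstar_SD2P (norm_sum1 :: 'a \<times> 'b \<Rightarrow> real))
       \<and> (\<forall>p::real. 1 < p \<longrightarrow> \<not> wstar_SD2P (norm_sump p :: 'a \<times> 'b \<Rightarrow> real))
       \<and> (wstar_SD2P (norm :: 'a \<Rightarrow> real) \<and> wstar_SD2P (norm :: 'b \<Rightarrow> real)
            \<longrightarrow> wstar_SD2P (norm_suminf :: 'a \<times> 'b \<Rightarrow> real))
       \<and> (wstar_SD2P (norm_suminf :: 'a \<times> 'b \<Rightarrow> real)
            \<longrightarrow> wstar_SD2P (norm :: 'a \<Rightarrow> real))"
  using parta[OF _ X_nontriv, where 'b='b] partb[OF _ X_nontriv Y_nontriv]
    partc[OF _ _ X_nontriv Y_nontriv] partd[where 'a='a and 'b='b]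
  by blast

end
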